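(* Let $(X,\rho,\mu)$ be a space of homogeneous type with infinitely many points. Then precisely one of the following holds: (1) $\mu(X)<\infty$; (2) $X$ is countably infinite and there is $\delta>0$ with $\mu(\{x\})\ge\delta$ for all $x\in X$; (3) the measures $\mu(B)$ of balls $B\subseteq X$ take arbitrarily small and arbitrarily large values (i.e. $\inf_B\mu(B)=0$ and $\sup_B\mu(B)=\infty$).
   Context: A space of homogeneous type $(X,\rho,\mu)$: $\rho$ is a quasi-metric on $X$, i.e. it satisfies the axioms of a metric except that the triangle inequality is replaced by $\rho(x,y)\le A_0(\rho(x,z)+\rho(z,y))$ for some constant $A_0\ge 1$; balls are $B(x,r)=\{y\in X:\rho(x,y)<r\}$; $\mu$ is a positive Borel measure defined on a $\sigma$-algebra containing the balls, with the doubling property: there is $C\ge1$ such that $0<\mu(B(x,2r))\le C\mu(B(x,r))<\infty$ for all $x\in X$, $r>0$. *)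

theory Defs
  imports "HOL-Analysis.Analysis"
begin

definition quasi_metric :: "'a set \<Rightarrow> ('a \<Rightarrow> 'a \<Rightarrow> real) \<Rightarrow> real \<Rightarrow> bool" where
  "quasi_metric X rho A0 \<longleftrightarrow> A0 \<ge> 1 \<and>
     (\<forall>x\<in>X. \<forall>y\<in>X. rho x y \<ge> 0 \<and> (rho x y = 0 \<longleftrightarrow> x = y) \<and> rho x y = rho y x) \<and>
     (\<forall>x\<in>X. \<forall>y\<in>X. \<forall>z\<in>X. rho x y \<le> A0 * (rho x z + rho z y))"

definition qball :: "'a set \<Rightarrow> ('a \<Rightarrow> 'a \<Rightarrow> real) \<Rightarrow> 'a \<Rightarrow> real \<Rightarrow> 'a set" where
  "qball X rho x r = {y\<in>X. rho x y < r}"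

definition homogeneous_type :: "'a set \<Rightarrow> ('a \<Rightarrow> 'a \<Rightarrow> real) \<Rightarrow> 'a measure \<Rightarrow> bool" where
  "homogeneous_type X rho M \<longleftrightarrow>
     (\<exists>A0. quasi_metric X rho A0) \<and> space M = X \<and>
     (\<forall>x\<in>X. \<forall>r. qball X rho x r \<in> sets M) \<and>
     (\<exists>C\<ge>1. \<forall>x\<in>X. \<forall>r>0.
        0 < emeasure M (qball X rho x (2*r)) \<and>
        emeasure M (qball X rho x (2*r)) \<le> ennreal C * emeasure M (qball X rho x r) \<and>
        emeasure M (qball X rho x r) < \<infinity>)"

end

theory Submission
  imports Defs
begin

lemma finite_if_mass:
  assumes A: "A \<in> sets M" and fin: "emeasure M A < \<infinity>" and d: "d > 0"
    and sing: "\<And>y. y \<in> A \<Longrightarrow> {y} \<in> sets M \<and> emeasure M {y} \<ge> ennreal d"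
  shows "finite A"
proof (rule ccontr)
  assume inf: "infinite A"
  obtain c where c: "emeasure M A = ennreal c" "c \<ge> 0"
    using fin by (cases "emeasure M A") auto
  define k where "k = nat (ceiling (c / d)) + 1"
  have kgt: "real k * d > c"
  proof -
    have "c / d < real k" unfolding k_def by linarith
    thus ?thesis using d by (simp add: field_simps)
  qed
  obtain F where F: "finite F" "card F = k" "F \<subseteq> A"
    using infinite_arbitrarily_large[OF inf] by blast
  have Fs: "\<And>x. x \<in> F \<Longrightarrow> {x} \<in> sets M" using F sing by blast
  have "ennreal (real k * d) = (\<Sum>x\<in>F. ennreal d)"
    using F d by (simp add: ennreal_mult' ennreal_of_nat_eq_real_of_nat)
  also have "\<dots> \<le> (\<Sum>x\<in>F. emeasure M {x})"
    by (rule sum_mono) (use F sing in blast)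
  also have "\<dots> = emeasure M F" using emeasure_eq_sum_singleton[OF F(1) Fs] by simp
  also have "\<dots> \<le> emeasure M A" using F(3) A by (rule emeasure_mono)
  also have "\<dots> = ennreal c" by (rule c)
  finally have "real k * d \<le> c" using c by (simp add: ennreal_le_iff)
  thus False using kgt by linarith
qed

theorem lemma2p4:
  fixes X :: "'a set" and rho :: "'a \<Rightarrow> 'a \<Rightarrow> real" and M :: "'a measure"
  assumes "homogeneous_type X rho M"
    and "infinite X"
  defines "P1 \<equiv> emeasure M X < \<infinity>"
    and "P2 \<equiv> countable X \<and> (\<exists>\<delta>>0. \<forall>x\<in>X. emeasure M {x} \<ge> ennreal \<delta>)"
    and "P3 \<equiv> Inf {emeasure M (qball X rho x r) | x r. x \<in> X \<and> r > 0} = 0 \<and>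
              Sup {emeasure M (qball X rho x r) | x r. x \<in> X \<and> r > 0} = \<infinity>"
  shows "(P1 \<or> P2 \<or> P3) \<and> \<not> (P1 \<and> P2) \<and> \<not> (P1 \<and> P3) \<and> \<not> (P2 \<and> P3)"
proof -
  define S where "S = {emeasure M (qball X rho x r) | x r. x \<in> X \<and> r > 0}"
  have memS: "\<And>x r. x \<in> X \<Longrightarrow> r > 0 \<Longrightarrow> emeasure M (qball X rho x r) \<in> S"
    unfolding S_def by blast
  obtain A0 where qm: "quasi_metric X rho A0" using assms(1) unfolding homogeneous_type_def by blast
  have sp: "space M = X" using assms(1) unfolding homogeneous_type_def by blast
  have bs: "\<And>x r. x \<in> X \<Longrightarrow> qball X rho x r \<in> sets M"
    using assms(1) unfolding homogeneous_type_def by blast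
  have bfin: "\<And>x r. x \<in> X \<Longrightarrow> r > 0 \<Longrightarrow> emeasure M (qball X rho x r) < \<infinity>"
    using assms(1) unfolding homogeneous_type_def by blast
  have rz: "\<And>x y. x \<in> X \<Longrightarrow> y \<in> X \<Longrightarrow> rho x y \<ge> 0 \<and> (rho x y = 0 \<longleftrightarrow> x = y)"
    using qm unfolding quasi_metric_def by blast
  have Xs: "X \<in> sets M" using sp sets.top by metis
  have center: "\<And>x r. x \<in> X \<Longrightarrow> r > 0 \<Longrightarrow> x \<in> qball X rho x r"
    using rz unfolding qball_def by (metis (mono_tags, lifting) mem_Collect_eq)
  have singeq: "{x} = (\<Inter>n. qball X rho x (1 / Suc n))" if x: "x \<in> X" for x
  proof
    show "{x} \<subseteq> (\<Inter>n. qball X rho x (1 / Suc n))" using center[OF x] by auto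
    show "(\<Inter>n. qball X rho x (1 / Suc n)) \<subseteq> {x}"
    proof
      fix y assume y: "y \<in> (\<Inter>n. qball X rho x (1 / Suc n))"
      hence yX: "y \<in> X" and lt: "\<And>n. rho x y < 1 / Suc n" unfolding qball_def by auto
      have "rho x y \<le> 0"
      proof (rule ccontr)
        assume "\<not> rho x y \<le> 0"
        then obtain n where "1 / Suc n < rho x y" using nat_approx_posE by (metis not_le of_nat_Suc)
        thus False using lt[of n] by simp
      qed
      thus "y \<in> {x}" using rz[OF x yX] by auto
    qed
  qed
  have singS: "{x} \<in> sets M" if x: "x \<in> X" for x
  proof -
    have "(\<Inter>n\<in>UNIV. qball X rho x (1 / Suc n)) \<in> sets M"
      by (rule sets.countable_INT) (use bs[OF x] in auto)
    thus ?thesis using singeq[OF x] by simp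
  qed
  have singINF: "emeasure M {x} = (INF n. emeasure M (qball X rho x (1 / Suc n)))" if x: "x \<in> X" for x
  proof -
    have "(INF n. emeasure M (qball X rho x (1 / Suc n))) = emeasure M (\<Inter>n. qball X rho x (1 / Suc n))"
    proof (rule INF_emeasure_decseq')
      show "\<And>i. qball X rho x (1 / real (Suc i)) \<in> sets M" using bs[OF x] by blast
      show "decseq (\<lambda>i. qball X rho x (1 / real (Suc i)))"
        unfolding decseq_def qball_def
        by (auto intro: less_le_trans[OF _ frac_le[of 1]])
      show "\<exists>i. emeasure M (qball X rho x (1 / real (Suc i))) \<noteq> \<infinity>"
        using bfin[OF x, of 1] by (intro exI[of _ 0]) auto
    qed
    thus ?thesis using singeq[OF x] by simp
  qed
  have ballle: "\<And>x r. x \<in> X \<Longrightarrow> emeasure M (qball X rho x r) \<le> emeasure M X"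
    using Xs by (intro emeasure_mono) (auto simp: qball_def)
  have n12: "\<not> (P1 \<and> P2)"
  proof
    assume h: "P1 \<and> P2"
    then obtain \<delta> where d: "\<delta> > 0" "\<forall>x\<in>X. emeasure M {x} \<ge> ennreal \<delta>" unfolding P2_def by blast
    have "finite X"
      by (rule finite_if_mass[OF Xs _ d(1)]) (use h d singS in \<open>auto simp: P1_def\<close>)
    thus False using assms(2) by simp
  qed
  have n13: "\<not> (P1 \<and> P3)"
  proof
    assume h: "P1 \<and> P3"
    have "Sup S \<le> emeasure M X" unfolding S_def using ballle by (auto intro!: Sup_least)
    moreover have "Sup S = \<infinity>" using h unfolding P3_def S_def by blast
    moreover have "emeasure M X < \<infinity>" using h unfolding P1_def by blast
    ultimately show False by (simp add: top_unique)
  qed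
  have n23: "\<not> (P2 \<and> P3)"
  proof
    assume h: "P2 \<and> P3"
    then obtain \<delta> where d: "\<delta> > 0" "\<forall>x\<in>X. emeasure M {x} \<ge> ennreal \<delta>" unfolding P2_def by blast
    have "ennreal \<delta> \<le> Inf S" unfolding S_def
    proof (rule Inf_greatest, clarify)
      fix x r assume x: "x \<in> X" and r: "(r::real) > 0"
      have "emeasure M {x} \<le> emeasure M (qball X rho x r)"
        using center[OF x r] bs[OF x] by (intro emeasure_mono) auto
      thus "ennreal \<delta> \<le> emeasure M (qball X rho x r)" using d x by (meson order.trans)
    qed
    thus False using h d(1) unfolding P3_def S_def by simp
  qed
  have ex: "P1 \<or> P2 \<or> P3"
  proof (rule ccontr)
    assume h: "\<not> (P1 \<or> P2 \<or> P3)"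
    obtain x0 where x0: "x0 \<in> X" using assms(2) by (metis finite.emptyI ex_in_conv)
    define B where "B n = qball X rho x0 (real (Suc n))" for n
    have Bun: "(\<Union>n. B n) = X"
    proof
      show "(\<Union>n. B n) \<subseteq> X" unfolding B_def qball_def by auto
      show "X \<subseteq> (\<Union>n. B n)"
      proof
        fix y assume y: "y \<in> X"
        obtain n where "rho x0 y < real n" using reals_Archimedean2 by blast
        hence "rho x0 y < real (Suc n)" by simp
        thus "y \<in> (\<Union>n. B n)" using y unfolding B_def qball_def by blast
      qed
    qed
    have Binc: "incseq B" unfolding incseq_def B_def qball_def by auto
    have Bs: "range B \<subseteq> sets M" using bs[OF x0] unfolding B_def by auto
    have Bfin: "\<And>n. emeasure M (B n) < \<infinity>" unfolding B_def using bfin[OF x0] by simp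
    have supB: "(SUP n. emeasure M (B n)) = emeasure M X"
      using SUP_emeasure_incseq[OF Bs Binc] Bun by simp
    have sup: "Sup S = \<infinity>"
    proof -
      have "emeasure M X \<le> Sup S" unfolding supB[symmetric] B_def
        by (rule SUP_least, rule Sup_upper, rule memS[OF x0]) simp
      moreover have "\<not> emeasure M X < \<infinity>" using h unfolding P1_def by blast
      hence "emeasure M X = \<infinity>" by (simp add: less_top[symmetric])
      ultimately show ?thesis by (simp add: top_unique)
    qed
    have inf: "Inf S \<noteq> 0" using h sup unfolding P3_def S_def by simp
    have "Inf S \<le> emeasure M (B 0)" unfolding B_def by (rule Inf_lower, rule memS[OF x0]) simp
    hence Sfin: "Inf S < \<infinity>" using Bfin[of 0] by simp
    define d where "d = enn2real (Inf S)"
    have dpos: "d > 0" using inf Sfin unfolding d_def by (simp add: enn2real_positive_iff zero_less_iff_neq_zero)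
    have dS: "ennreal d = Inf S" using Sfin unfolding d_def by simp
    have sing: "emeasure M {x} \<ge> ennreal d" if x: "x \<in> X" for x
      unfolding singINF[OF x] dS by (rule INF_greatest, rule Inf_lower, rule memS[OF x]) simp
    have "finite (B n)" for n
      by (rule finite_if_mass[OF _ Bfin dpos]) (use Bs sing singS in \<open>auto simp: B_def qball_def\<close>)
    hence "countable X" using Bun by (metis countable_UN countable_finite UNIV_I countableI_type)
    hence P2 using sing dpos unfolding P2_def by blast
    thus False using h by simp
  qed
  show ?thesis using ex n12 n13 n23 by blast
qed

end
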